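(* Let $(\mathcal C,\mathbb E,\mathfrak s)$ be an $n$-exangulated category and $\varphi^\bullet:A^\bullet\to B^\bullet$ a morphism in $S(\mathcal C)$, where $A^\bullet=(A_0\xrightarrow{\alpha_0}\cdots\xrightarrow{\alpha_n}A_{n+1}\overset{\delta}{\dashrightarrow})$ and $B^\bullet=(B_0\xrightarrow{\beta_0}\cdots\xrightarrow{\beta_n}B_{n+1}\overset{\delta'}{\dashrightarrow})$. Then $\underline{\varphi^\bullet}$ is an epimorphism in $S(\mathcal C)/\mathcal R_2$ if and only if $[\varphi_{n+1}\ \ \beta_n]:A_{n+1}\oplus B_n\to B_{n+1}$ is a retraction (split epimorphism) in $\mathcal C$.
   Context: $(\mathcal C,\mathbb E,\mathfrak s)$ is an $n$-exangulated category in the sense of Herschend–Liu–Nakaoka; for $\delta\in\mathbb E(C,A)$, $a_*\delta=\mathbb E(C,a)\delta$, $c^*\delta=\mathbb E(c,A)\delta$. $S(\mathcal C)$ is the category whose objects are distinguished $n$-exangles and whose morphisms $A^\bullet\to B^\bullet$ are tuples $(\varphi_0,\dots,\varphi_{n+1})$ making all squares commute with $(\varphi_0)_*\delta=(\varphi_{n+1})^*\delta'$. $\mathcal R_2$ is the ideal of morphisms $\varphi^\bullet$ with $\varphi_{n+1}$ factoring through $\beta_n$, and $\underline{\varphi^\bullet}$ denotes the class in $S(\mathcal C)/\mathcal R_2$. *)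

theory Defs
  imports Main
begin

text \<open>A category is given by objects, arrows (each arrow knows its domain and codomain),
 composition and identities, together with the additive structure (abelian group structure
 on each hom-set, a chosen zero object, chosen biproducts), a bifunctor E with values in
 abelian groups (elements of E(C,A) know their "domain" C and "codomain" A), its
 actions a_* (push) and c^* (pull), and the realization relation:
 rl d X dX means that the complex (X,dX) belongs to the class s(d).\<close>

record ('o, 'm, 'e) exang_data =
  ob  :: "'o set"
  arr :: "'m set"
  dm  :: "'m \<Rightarrow> 'o"
  cd  :: "'m \<Rightarrow> 'o"
  cp  :: "'m \<Rightarrow> 'm \<Rightarrow> 'm"          \<comment> \<open>cp g f = g o f\<close>
  idm :: "'o \<Rightarrow> 'm"
  ad  :: "'m \<Rightarrow> 'm \<Rightarrow> 'm"
  ng  :: "'m \<Rightarrow> 'm"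
  zm  :: "'o \<Rightarrow> 'o \<Rightarrow> 'm"
  zo  :: "'o"
  bp  :: "'o \<Rightarrow> 'o \<Rightarrow> 'o"
  in1 :: "'o \<Rightarrow> 'o \<Rightarrow> 'm"
  in2 :: "'o \<Rightarrow> 'o \<Rightarrow> 'm"
  pr1 :: "'o \<Rightarrow> 'o \<Rightarrow> 'm"
  pr2 :: "'o \<Rightarrow> 'o \<Rightarrow> 'm"
  ext :: "'e set"
  edm :: "'e \<Rightarrow> 'o"                 \<comment> \<open>d \<in> E(C,A): edm d = C\<close>
  ecd :: "'e \<Rightarrow> 'o"                 \<comment> \<open>d \<in> E(C,A): ecd d = A\<close>
  ead :: "'e \<Rightarrow> 'e \<Rightarrow> 'e"
  eng :: "'e \<Rightarrow> 'e"
  ezr :: "'o \<Rightarrow> 'o \<Rightarrow> 'e"          \<comment> \<open>ezr C A = 0 in E(C,A)\<close>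
  psh :: "'m \<Rightarrow> 'e \<Rightarrow> 'e"
  pll :: "'m \<Rightarrow> 'e \<Rightarrow> 'e"
  rl  :: "'e \<Rightarrow> (nat \<Rightarrow> 'o) \<Rightarrow> (nat \<Rightarrow> 'm) \<Rightarrow> bool"

definition hom :: "('o,'m,'e,'z) exang_data_scheme \<Rightarrow> 'o \<Rightarrow> 'o \<Rightarrow> 'm set" where
  "hom C A B = {f \<in> arr C. dm C f = A \<and> cd C f = B}"

definition Ext :: "('o,'m,'e,'z) exang_data_scheme \<Rightarrow> 'o \<Rightarrow> 'o \<Rightarrow> 'e set" where
  "Ext C X A = {d \<in> ext C. edm C d = X \<and> ecd C d = A}"

definition additive_cat :: "('o,'m,'e,'z) exang_data_scheme \<Rightarrow> bool" where
  "additive_cat C \<longleftrightarrow>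
    (\<forall>f\<in>arr C. dm C f \<in> ob C \<and> cd C f \<in> ob C) \<and>
    (\<forall>A\<in>ob C. idm C A \<in> hom C A A) \<and>
    (\<forall>A B D f g. f \<in> hom C A B \<longrightarrow> g \<in> hom C B D \<longrightarrow> cp C g f \<in> hom C A D) \<and>
    (\<forall>A B D E f g h. f \<in> hom C A B \<longrightarrow> g \<in> hom C B D \<longrightarrow> h \<in> hom C D E \<longrightarrow>
        cp C h (cp C g f) = cp C (cp C h g) f) \<and>
    (\<forall>A B f. f \<in> hom C A B \<longrightarrow> cp C (idm C B) f = f \<and> cp C f (idm C A) = f) \<and>
    \<comment> \<open>each hom-set is an abelian group\<close>
    (\<forall>A\<in>ob C. \<forall>B\<in>ob C. zm C A B \<in> hom C A B) \<and>
    (\<forall>A B f g. f \<in> hom C A B \<longrightarrow> g \<in> hom C A B \<longrightarrow> ad C f g \<in> hom C A B) \<and>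
    (\<forall>A B f. f \<in> hom C A B \<longrightarrow> ng C f \<in> hom C A B) \<and>
    (\<forall>A B f g h. f \<in> hom C A B \<longrightarrow> g \<in> hom C A B \<longrightarrow> h \<in> hom C A B \<longrightarrow>
        ad C (ad C f g) h = ad C f (ad C g h)) \<and>
    (\<forall>A B f g. f \<in> hom C A B \<longrightarrow> g \<in> hom C A B \<longrightarrow> ad C f g = ad C g f) \<and>
    (\<forall>A B f. f \<in> hom C A B \<longrightarrow> ad C f (zm C A B) = f \<and> ad C f (ng C f) = zm C A B) \<and>
    \<comment> \<open>composition is bilinear\<close>
    (\<forall>A B D f f' g. f \<in> hom C A B \<longrightarrow> f' \<in> hom C A B \<longrightarrow> g \<in> hom C B D \<longrightarrow>
        cp C g (ad C f f') = ad C (cp C g f) (cp C g f')) \<and>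
    (\<forall>A B D f g g'. f \<in> hom C A B \<longrightarrow> g \<in> hom C B D \<longrightarrow> g' \<in> hom C B D \<longrightarrow>
        cp C (ad C g g') f = ad C (cp C g f) (cp C g' f)) \<and>
    \<comment> \<open>zero object\<close>
    zo C \<in> ob C \<and>
    (\<forall>A\<in>ob C. hom C (zo C) A = {zm C (zo C) A} \<and> hom C A (zo C) = {zm C A (zo C)}) \<and>
    \<comment> \<open>biproducts\<close>
    (\<forall>A\<in>ob C. \<forall>B\<in>ob C. bp C A B \<in> ob C \<and>
        in1 C A B \<in> hom C A (bp C A B) \<and> in2 C A B \<in> hom C B (bp C A B) \<and>
        pr1 C A B \<in> hom C (bp C A B) A \<and> pr2 C A B \<in> hom C (bp C A B) B \<and>
        cp C (pr1 C A B) (in1 C A B) = idm C A \<and> cp C (pr2 C A B) (in2 C A B) = idm C B \<and>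
        cp C (pr1 C A B) (in2 C A B) = zm C B A \<and> cp C (pr2 C A B) (in1 C A B) = zm C A B \<and>
        ad C (cp C (in1 C A B) (pr1 C A B)) (cp C (in2 C A B) (pr2 C A B)) = idm C (bp C A B))"

definition biadditive_E :: "('o,'m,'e,'z) exang_data_scheme \<Rightarrow> bool" where
  "biadditive_E C \<longleftrightarrow>
    (\<forall>d\<in>ext C. edm C d \<in> ob C \<and> ecd C d \<in> ob C) \<and>
    (\<forall>X\<in>ob C. \<forall>A\<in>ob C. ezr C X A \<in> Ext C X A) \<and>
    (\<forall>X A d d'. d \<in> Ext C X A \<longrightarrow> d' \<in> Ext C X A \<longrightarrow> ead C d d' \<in> Ext C X A) \<and>
    (\<forall>X A d. d \<in> Ext C X A \<longrightarrow> eng C d \<in> Ext C X A) \<and>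
    (\<forall>X A d d' d''. d \<in> Ext C X A \<longrightarrow> d' \<in> Ext C X A \<longrightarrow> d'' \<in> Ext C X A \<longrightarrow>
        ead C (ead C d d') d'' = ead C d (ead C d' d'')) \<and>
    (\<forall>X A d d'. d \<in> Ext C X A \<longrightarrow> d' \<in> Ext C X A \<longrightarrow> ead C d d' = ead C d' d) \<and>
    (\<forall>X A d. d \<in> Ext C X A \<longrightarrow> ead C d (ezr C X A) = d \<and> ead C d (eng C d) = ezr C X A) \<and>
    \<comment> \<open>actions of morphisms\<close>
    (\<forall>X A A' a d. a \<in> hom C A A' \<longrightarrow> d \<in> Ext C X A \<longrightarrow> psh C a d \<in> Ext C X A') \<and>
    (\<forall>X X' A c d. c \<in> hom C X' X \<longrightarrow> d \<in> Ext C X A \<longrightarrow> pll C c d \<in> Ext C X' A) \<and>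
    \<comment> \<open>functoriality\<close>
    (\<forall>X A d. d \<in> Ext C X A \<longrightarrow> psh C (idm C A) d = d \<and> pll C (idm C X) d = d) \<and>
    (\<forall>X A A' A'' a b d. a \<in> hom C A A' \<longrightarrow> b \<in> hom C A' A'' \<longrightarrow> d \<in> Ext C X A \<longrightarrow>
        psh C (cp C b a) d = psh C b (psh C a d)) \<and>
    (\<forall>X X' X'' A c c' d. c \<in> hom C X' X \<longrightarrow> c' \<in> hom C X'' X' \<longrightarrow> d \<in> Ext C X A \<longrightarrow>
        pll C (cp C c c') d = pll C c' (pll C c d)) \<and>
    (\<forall>X X' A A' a c d. a \<in> hom C A A' \<longrightarrow> c \<in> hom C X' X \<longrightarrow> d \<in> Ext C X A \<longrightarrow>
        psh C a (pll C c d) = pll C c (psh C a d)) \<and>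
    \<comment> \<open>values in abelian groups: the induced maps are group homomorphisms\<close>
    (\<forall>X A A' a d d'. a \<in> hom C A A' \<longrightarrow> d \<in> Ext C X A \<longrightarrow> d' \<in> Ext C X A \<longrightarrow>
        psh C a (ead C d d') = ead C (psh C a d) (psh C a d')) \<and>
    (\<forall>X X' A c d d'. c \<in> hom C X' X \<longrightarrow> d \<in> Ext C X A \<longrightarrow> d' \<in> Ext C X A \<longrightarrow>
        pll C c (ead C d d') = ead C (pll C c d) (pll C c d')) \<and>
    \<comment> \<open>biadditivity\<close>
    (\<forall>X A A' a a' d. a \<in> hom C A A' \<longrightarrow> a' \<in> hom C A A' \<longrightarrow> d \<in> Ext C X A \<longrightarrow>
        psh C (ad C a a') d = ead C (psh C a d) (psh C a' d)) \<and>
    (\<forall>X X' A c c' d. c \<in> hom C X' X \<longrightarrow> c' \<in> hom C X' X \<longrightarrow> d \<in> Ext C X A \<longrightarrow>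
        pll C (ad C c c') d = ead C (pll C c d) (pll C c' d))"

definition is_complex :: "nat \<Rightarrow> ('o,'m,'e,'z) exang_data_scheme \<Rightarrow> (nat \<Rightarrow> 'o) \<Rightarrow> (nat \<Rightarrow> 'm) \<Rightarrow> bool" where
  "is_complex n C X d \<longleftrightarrow>
    (\<forall>i\<le>Suc n. X i \<in> ob C) \<and>
    (\<forall>i\<le>n. d i \<in> hom C (X i) (X (Suc i))) \<and>
    (\<forall>i<n. cp C (d (Suc i)) (d i) = zm C (X i) (X (Suc (Suc i))))"

definition cmorph :: "nat \<Rightarrow> ('o,'m,'e,'z) exang_data_scheme \<Rightarrow> (nat \<Rightarrow> 'o) \<Rightarrow> (nat \<Rightarrow> 'm)
    \<Rightarrow> (nat \<Rightarrow> 'o) \<Rightarrow> (nat \<Rightarrow> 'm) \<Rightarrow> (nat \<Rightarrow> 'm) \<Rightarrow> bool" where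
  "cmorph n C X d Y e f \<longleftrightarrow>
    (\<forall>i\<le>Suc n. f i \<in> hom C (X i) (Y i)) \<and>
    (\<forall>i\<le>n. cp C (f (Suc i)) (d i) = cp C (e i) (f i))"

definition ccomp :: "('o,'m,'e,'z) exang_data_scheme \<Rightarrow> (nat \<Rightarrow> 'm) \<Rightarrow> (nat \<Rightarrow> 'm) \<Rightarrow> (nat \<Rightarrow> 'm)" where
  "ccomp C g f = (\<lambda>i. cp C (g i) (f i))"

text \<open>Homotopy of morphisms of complexes (standard convention, phi^0 = 0 and phi^{n+2} = 0).\<close>
definition homotopic :: "nat \<Rightarrow> ('o,'m,'e,'z) exang_data_scheme \<Rightarrow> (nat \<Rightarrow> 'o) \<Rightarrow> (nat \<Rightarrow> 'm)
    \<Rightarrow> (nat \<Rightarrow> 'o) \<Rightarrow> (nat \<Rightarrow> 'm) \<Rightarrow> (nat \<Rightarrow> 'm) \<Rightarrow> (nat \<Rightarrow> 'm) \<Rightarrow> bool" where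
  "homotopic n C X d Y e f g \<longleftrightarrow> (\<exists>h.
    (\<forall>i. 1 \<le> i \<and> i \<le> Suc n \<longrightarrow> h i \<in> hom C (X i) (Y (i - 1))) \<and>
    ad C (f 0) (ng C (g 0)) = cp C (h 1) (d 0) \<and>
    (\<forall>i. 1 \<le> i \<and> i \<le> n \<longrightarrow>
        ad C (f i) (ng C (g i)) = ad C (cp C (e (i - 1)) (h i)) (cp C (h (Suc i)) (d i))) \<and>
    ad C (f (Suc n)) (ng C (g (Suc n))) = cp C (e n) (h (Suc n)))"

definition htpy_equiv :: "nat \<Rightarrow> ('o,'m,'e,'z) exang_data_scheme \<Rightarrow> (nat \<Rightarrow> 'o) \<Rightarrow> (nat \<Rightarrow> 'm)
    \<Rightarrow> (nat \<Rightarrow> 'o) \<Rightarrow> (nat \<Rightarrow> 'm) \<Rightarrow> bool" where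
  "htpy_equiv n C X d Y e \<longleftrightarrow> X 0 = Y 0 \<and> X (Suc n) = Y (Suc n) \<and>
    (\<exists>f g. cmorph n C X d Y e f \<and> f 0 = idm C (X 0) \<and> f (Suc n) = idm C (X (Suc n)) \<and>
           cmorph n C Y e X d g \<and> g 0 = idm C (X 0) \<and> g (Suc n) = idm C (X (Suc n)) \<and>
           homotopic n C X d X d (ccomp C g f) (\<lambda>i. idm C (X i)) \<and>
           homotopic n C Y e Y e (ccomp C f g) (\<lambda>i. idm C (Y i)))"

definition n_exangle :: "nat \<Rightarrow> ('o,'m,'e,'z) exang_data_scheme \<Rightarrow> (nat \<Rightarrow> 'o) \<Rightarrow> (nat \<Rightarrow> 'm) \<Rightarrow> 'e \<Rightarrow> bool" where
  "n_exangle n C X d del \<longleftrightarrow>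
    is_complex n C X d \<and> del \<in> Ext C (X (Suc n)) (X 0) \<and>
    psh C (d 0) del = ezr C (X (Suc n)) (X 1) \<and>
    pll C (d n) del = ezr C (X n) (X 0) \<and>
    \<comment> \<open>exactness of C(-,X^0) \<rightarrow> ... \<rightarrow> C(-,X^{n+1}) \<rightarrow> E(-,X^0)\<close>
    (\<forall>W\<in>ob C. \<forall>i. 1 \<le> i \<and> i \<le> n \<longrightarrow> (\<forall>f \<in> hom C W (X i).
        cp C (d i) f = zm C W (X (Suc i)) \<longrightarrow> (\<exists>g \<in> hom C W (X (i - 1)). f = cp C (d (i - 1)) g))) \<and>
    (\<forall>W\<in>ob C. \<forall>f \<in> hom C W (X (Suc n)).
        pll C f del = ezr C W (X 0) \<longrightarrow> (\<exists>g \<in> hom C W (X n). f = cp C (d n) g)) \<and>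
    \<comment> \<open>exactness of C(X^{n+1},-) \<rightarrow> ... \<rightarrow> C(X^0,-) \<rightarrow> E(X^{n+1},-)\<close>
    (\<forall>W\<in>ob C. \<forall>i. 1 \<le> i \<and> i \<le> n \<longrightarrow> (\<forall>g \<in> hom C (X i) W.
        cp C g (d (i - 1)) = zm C (X (i - 1)) W \<longrightarrow> (\<exists>h \<in> hom C (X (Suc i)) W. g = cp C h (d i)))) \<and>
    (\<forall>W\<in>ob C. \<forall>g \<in> hom C (X 0) W.
        psh C g del = ezr C (X (Suc n)) W \<longrightarrow> (\<exists>h \<in> hom C (X 1) W. g = cp C h (d 0)))"

definition cone_obj :: "nat \<Rightarrow> ('o,'m,'e,'z) exang_data_scheme \<Rightarrow> (nat \<Rightarrow> 'o) \<Rightarrow> (nat \<Rightarrow> 'o) \<Rightarrow> nat \<Rightarrow> 'o" where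
  "cone_obj n C X Y i =
    (if i = 0 then X 1 else if i \<le> n then bp C (X (Suc i)) (Y i) else Y (Suc n))"

definition cone_d :: "nat \<Rightarrow> ('o,'m,'e,'z) exang_data_scheme \<Rightarrow> (nat \<Rightarrow> 'o) \<Rightarrow> (nat \<Rightarrow> 'm)
    \<Rightarrow> (nat \<Rightarrow> 'o) \<Rightarrow> (nat \<Rightarrow> 'm) \<Rightarrow> (nat \<Rightarrow> 'm) \<Rightarrow> nat \<Rightarrow> 'm" where
  "cone_d n C X d Y e f i =
    (if i = 0 then
       ad C (cp C (in1 C (X 2) (Y 1)) (ng C (d 1))) (cp C (in2 C (X 2) (Y 1)) (f 1))
     else if i < n then
       ad C (ad C (cp C (in1 C (X (Suc (Suc i))) (Y (Suc i))) (cp C (ng C (d (Suc i))) (pr1 C (X (Suc i)) (Y i))))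
                  (cp C (in2 C (X (Suc (Suc i))) (Y (Suc i))) (cp C (f (Suc i)) (pr1 C (X (Suc i)) (Y i)))))
            (cp C (in2 C (X (Suc (Suc i))) (Y (Suc i))) (cp C (e i) (pr2 C (X (Suc i)) (Y i))))
     else
       ad C (cp C (f (Suc n)) (pr1 C (X (Suc n)) (Y n))) (cp C (e n) (pr2 C (X (Suc n)) (Y n))))"

definition cocone_obj :: "nat \<Rightarrow> ('o,'m,'e,'z) exang_data_scheme \<Rightarrow> (nat \<Rightarrow> 'o) \<Rightarrow> (nat \<Rightarrow> 'o) \<Rightarrow> nat \<Rightarrow> 'o" where
  "cocone_obj n C B A i =
    (if i = 0 then B 0 else if i \<le> n then bp C (B i) (A (i - 1)) else A n)"

definition cocone_d :: "nat \<Rightarrow> ('o,'m,'e,'z) exang_data_scheme \<Rightarrow> (nat \<Rightarrow> 'o) \<Rightarrow> (nat \<Rightarrow> 'm)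
    \<Rightarrow> (nat \<Rightarrow> 'o) \<Rightarrow> (nat \<Rightarrow> 'm) \<Rightarrow> (nat \<Rightarrow> 'm) \<Rightarrow> nat \<Rightarrow> 'm" where
  "cocone_d n C B dB A dA f i =
    (if i = 0 then
       ad C (cp C (in1 C (B 1) (A 0)) (ng C (dB 0))) (cp C (in2 C (B 1) (A 0)) (f 0))
     else if i < n then
       ad C (ad C (cp C (in1 C (B (Suc i)) (A i)) (cp C (ng C (dB i)) (pr1 C (B i) (A (i - 1)))))
                  (cp C (in2 C (B (Suc i)) (A i)) (cp C (f i) (pr1 C (B i) (A (i - 1))))))
            (cp C (in2 C (B (Suc i)) (A i)) (cp C (dA (i - 1)) (pr2 C (B i) (A (i - 1)))))
     else
       ad C (cp C (f n) (pr1 C (B n) (A (n - 1)))) (cp C (dA (n - 1)) (pr2 C (B n) (A (n - 1)))))"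

section \<open>Exact realizations and n-exangulated categories (Herschend-Liu-Nakaoka)\<close>

definition realization :: "nat \<Rightarrow> ('o,'m,'e,'z) exang_data_scheme \<Rightarrow> bool" where
  "realization n C \<longleftrightarrow>
    \<comment> \<open>s(d) is a homotopy equivalence class in C^{n+2}_{(A,C)}\<close>
    (\<forall>del X d. rl C del X d \<longrightarrow> del \<in> ext C \<and> is_complex n C X d \<and>
        X 0 = ecd C del \<and> X (Suc n) = edm C del) \<and>
    (\<forall>del \<in> ext C. \<exists>X d. rl C del X d) \<and>
    (\<forall>del X d Y e. rl C del X d \<longrightarrow> rl C del Y e \<longrightarrow> htpy_equiv n C X d Y e) \<and>
    (\<forall>del X d Y e. rl C del X d \<longrightarrow> is_complex n C Y e \<longrightarrow> htpy_equiv n C X d Y e \<longrightarrow> rl C del Y e) \<and>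
    \<comment> \<open>(R0)\<close>
    (\<forall>del del' a c X d Y e. rl C del X d \<longrightarrow> rl C del' Y e \<longrightarrow>
        a \<in> hom C (ecd C del) (ecd C del') \<longrightarrow> c \<in> hom C (edm C del) (edm C del') \<longrightarrow>
        psh C a del = pll C c del' \<longrightarrow>
        (\<exists>f. cmorph n C X d Y e f \<and> f 0 = a \<and> f (Suc n) = c)) \<and>
    \<comment> \<open>(R1)\<close>
    (\<forall>del X d. rl C del X d \<longrightarrow> n_exangle n C X d del) \<and>
    \<comment> \<open>(R2)\<close>
    (\<forall>A\<in>ob C. rl C (ezr C (zo C) A)
        (\<lambda>i. if i \<le> 1 then A else zo C)
        (\<lambda>i. if i = 0 then idm C A else zm C (if i = 1 then A else zo C) (zo C))) \<and>
    (\<forall>A\<in>ob C. rl C (ezr C A (zo C))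
        (\<lambda>i. if n \<le> i then A else zo C)
        (\<lambda>i. if i = n then idm C A else zm C (zo C) (if Suc i = n then A else zo C)))"

definition inflation :: "('o,'m,'e,'z) exang_data_scheme \<Rightarrow> 'm \<Rightarrow> bool" where
  "inflation C a \<longleftrightarrow> (\<exists>del X d. rl C del X d \<and> d 0 = a)"

definition deflation :: "nat \<Rightarrow> ('o,'m,'e,'z) exang_data_scheme \<Rightarrow> 'm \<Rightarrow> bool" where
  "deflation n C a \<longleftrightarrow> (\<exists>del X d. rl C del X d \<and> d n = a)"

definition n_exangulated :: "nat \<Rightarrow> ('o,'m,'e,'z) exang_data_scheme \<Rightarrow> bool" where
  "n_exangulated n C \<longleftrightarrow> 1 \<le> n \<and> additive_cat C \<and> biadditive_E C \<and> realization n C \<and>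
    \<comment> \<open>(EA1)\<close>
    (\<forall>a0 a1. inflation C a0 \<longrightarrow> inflation C a1 \<longrightarrow> cd C a0 = dm C a1 \<longrightarrow> inflation C (cp C a1 a0)) \<and>
    (\<forall>a0 a1. deflation n C a0 \<longrightarrow> deflation n C a1 \<longrightarrow> cd C a0 = dm C a1 \<longrightarrow> deflation n C (cp C a1 a0)) \<and>
    \<comment> \<open>(EA2)\<close>
    (\<forall>rho c D A Cc X d Y e. rho \<in> Ext C D A \<longrightarrow> c \<in> hom C Cc D \<longrightarrow>
        rl C (pll C c rho) X d \<longrightarrow> rl C rho Y e \<longrightarrow>
        (\<exists>f. cmorph n C X d Y e f \<and> f 0 = idm C A \<and> f (Suc n) = c \<and>
             rl C (psh C (d 0) rho) (cone_obj n C X Y) (cone_d n C X d Y e f))) \<and>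
    \<comment> \<open>(EA2op)\<close>
    (\<forall>rho a D A Cc X d Y e. rho \<in> Ext C Cc D \<longrightarrow> a \<in> hom C D A \<longrightarrow>
        rl C (psh C a rho) X d \<longrightarrow> rl C rho Y e \<longrightarrow>
        (\<exists>f. cmorph n C Y e X d f \<and> f 0 = a \<and> f (Suc n) = idm C Cc \<and>
             rl C (pll C (d n) rho) (cocone_obj n C Y X) (cocone_d n C Y e X d f)))"

section \<open>The category S(C) and the quotient S(C)/R_2\<close>

definition S_obj :: "nat \<Rightarrow> ('o,'m,'e,'z) exang_data_scheme \<Rightarrow> (nat \<Rightarrow> 'o) \<Rightarrow> (nat \<Rightarrow> 'm) \<Rightarrow> 'e \<Rightarrow> bool" where
  "S_obj n C X d del \<longleftrightarrow> rl C del X d"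

definition S_mor :: "nat \<Rightarrow> ('o,'m,'e,'z) exang_data_scheme \<Rightarrow> (nat \<Rightarrow> 'o) \<Rightarrow> (nat \<Rightarrow> 'm) \<Rightarrow> 'e
    \<Rightarrow> (nat \<Rightarrow> 'o) \<Rightarrow> (nat \<Rightarrow> 'm) \<Rightarrow> 'e \<Rightarrow> (nat \<Rightarrow> 'm) \<Rightarrow> bool" where
  "S_mor n C X d del Y e del' f \<longleftrightarrow>
    cmorph n C X d Y e f \<and> psh C (f 0) del = pll C (f (Suc n)) del'"

text \<open>f and g (both X \<rightarrow> Y) are equal in S(C)/R_2 iff f - g lies in R_2, i.e.
  (f - g)_{n+1} factors through the last differential e_n of the target.\<close>
definition R2_equiv :: "nat \<Rightarrow> ('o,'m,'e,'z) exang_data_scheme \<Rightarrow> (nat \<Rightarrow> 'o)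
    \<Rightarrow> (nat \<Rightarrow> 'o) \<Rightarrow> (nat \<Rightarrow> 'm) \<Rightarrow> (nat \<Rightarrow> 'm) \<Rightarrow> (nat \<Rightarrow> 'm) \<Rightarrow> bool" where
  "R2_equiv n C X Y e f g \<longleftrightarrow>
    (\<exists>h \<in> hom C (X (Suc n)) (Y n). ad C (f (Suc n)) (ng C (g (Suc n))) = cp C (e n) h)"

definition S_R2_epi :: "nat \<Rightarrow> ('o,'m,'e,'z) exang_data_scheme \<Rightarrow> (nat \<Rightarrow> 'o) \<Rightarrow> (nat \<Rightarrow> 'm) \<Rightarrow> 'e
    \<Rightarrow> (nat \<Rightarrow> 'o) \<Rightarrow> (nat \<Rightarrow> 'm) \<Rightarrow> 'e \<Rightarrow> (nat \<Rightarrow> 'm) \<Rightarrow> bool" where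
  "S_R2_epi n C X d del Y e del' f \<longleftrightarrow>
    (\<forall>Z z del'' g g'. S_obj n C Z z del'' \<longrightarrow>
        S_mor n C Y e del' Z z del'' g \<longrightarrow> S_mor n C Y e del' Z z del'' g' \<longrightarrow>
        R2_equiv n C X Z z (ccomp C g f) (ccomp C g' f) \<longrightarrow>
        R2_equiv n C Y Z z g g')"

text \<open>[f g] : dom f + dom g \<rightarrow> cod f\<close>
definition copair :: "('o,'m,'e,'z) exang_data_scheme \<Rightarrow> 'm \<Rightarrow> 'm \<Rightarrow> 'm" where
  "copair C f g = ad C (cp C f (pr1 C (dm C f) (dm C g))) (cp C g (pr2 C (dm C f) (dm C g)))"

definition retraction :: "('o,'m,'e,'z) exang_data_scheme \<Rightarrow> 'm \<Rightarrow> bool" where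
  "retraction C r \<longleftrightarrow> r \<in> arr C \<and> (\<exists>s \<in> hom C (cd C r) (dm C r). cp C r s = idm C (cd C r))"

end

theory Submission
  imports Defs
begin

lemma homI: "f \<in> arr C \<Longrightarrow> dm C f = A \<Longrightarrow> cd C f = B \<Longrightarrow> f \<in> hom C A B"
  by (simp add: hom_def)
lemma homD: "f \<in> hom C A B \<Longrightarrow> f \<in> arr C \<and> dm C f = A \<and> cd C f = B"
  by (simp add: hom_def)

context fixes C :: "('o,'m,'e,'z) exang_data_scheme" assumes ac: "additive_cat C"
begin
lemma ac_raw:
 "(\<forall>f\<in>arr C. dm C f \<in> ob C \<and> cd C f \<in> ob C)"
 "(\<forall>A\<in>ob C. idm C A \<in> hom C A A)"
 "(\<forall>A B D f g. f \<in> hom C A B \<longrightarrow> g \<in> hom C B D \<longrightarrow> cp C g f \<in> hom C A D)"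
 "(\<forall>A B D E f g h. f \<in> hom C A B \<longrightarrow> g \<in> hom C B D \<longrightarrow> h \<in> hom C D E \<longrightarrow>
        cp C h (cp C g f) = cp C (cp C h g) f)"
 "(\<forall>A B f. f \<in> hom C A B \<longrightarrow> cp C (idm C B) f = f \<and> cp C f (idm C A) = f)"
 "(\<forall>A\<in>ob C. \<forall>B\<in>ob C. zm C A B \<in> hom C A B)"
 "(\<forall>A B f g. f \<in> hom C A B \<longrightarrow> g \<in> hom C A B \<longrightarrow> ad C f g \<in> hom C A B)"
 "(\<forall>A B f. f \<in> hom C A B \<longrightarrow> ng C f \<in> hom C A B)"
 "(\<forall>A B f g h. f \<in> hom C A B \<longrightarrow> g \<in> hom C A B \<longrightarrow> h \<in> hom C A B \<longrightarrow>
        ad C (ad C f g) h = ad C f (ad C g h))"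
 "(\<forall>A B f g. f \<in> hom C A B \<longrightarrow> g \<in> hom C A B \<longrightarrow> ad C f g = ad C g f)"
 "(\<forall>A B f. f \<in> hom C A B \<longrightarrow> ad C f (zm C A B) = f \<and> ad C f (ng C f) = zm C A B)"
 "(\<forall>A B D f f' g. f \<in> hom C A B \<longrightarrow> f' \<in> hom C A B \<longrightarrow> g \<in> hom C B D \<longrightarrow>
        cp C g (ad C f f') = ad C (cp C g f) (cp C g f'))"
 "(\<forall>A B D f g g'. f \<in> hom C A B \<longrightarrow> g \<in> hom C B D \<longrightarrow> g' \<in> hom C B D \<longrightarrow>
        cp C (ad C g g') f = ad C (cp C g f) (cp C g' f))"
 "(\<forall>A\<in>ob C. \<forall>B\<in>ob C. bp C A B \<in> ob C \<and>
        in1 C A B \<in> hom C A (bp C A B) \<and> in2 C A B \<in> hom C B (bp C A B) \<and>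
        pr1 C A B \<in> hom C (bp C A B) A \<and> pr2 C A B \<in> hom C (bp C A B) B \<and>
        cp C (pr1 C A B) (in1 C A B) = idm C A \<and> cp C (pr2 C A B) (in2 C A B) = idm C B \<and>
        cp C (pr1 C A B) (in2 C A B) = zm C B A \<and> cp C (pr2 C A B) (in1 C A B) = zm C A B \<and>
        ad C (cp C (in1 C A B) (pr1 C A B)) (cp C (in2 C A B) (pr2 C A B)) = idm C (bp C A B))"
  by (insert ac[unfolded additive_cat_def], (elim conjE, assumption)+)

lemma ob_dm: assumes "f \<in> hom C A B" shows "A \<in> ob C"
proof -
  have "f \<in> arr C" "dm C f = A" using assms by (simp_all add: hom_def)
  thus ?thesis using ac_raw(1) by auto
qed
lemma ob_cd: assumes "f \<in> hom C A B" shows "B \<in> ob C"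
proof -
  have "f \<in> arr C" "cd C f = B" using assms by (simp_all add: hom_def)
  thus ?thesis using ac_raw(1) by auto
qed
lemma id_hom: "A \<in> ob C \<Longrightarrow> idm C A \<in> hom C A A"
  by (rule ac_raw(2)[rule_format])
lemma cp_hom: "f \<in> hom C A B \<Longrightarrow> g \<in> hom C B D \<Longrightarrow> cp C g f \<in> hom C A D"
  by (rule ac_raw(3)[rule_format])
lemma cp_assoc: "f \<in> hom C A B \<Longrightarrow> g \<in> hom C B D \<Longrightarrow> h \<in> hom C D E \<Longrightarrow>
        cp C h (cp C g f) = cp C (cp C h g) f"
  by (rule ac_raw(4)[rule_format])
lemma id_l: "f \<in> hom C A B \<Longrightarrow> cp C (idm C B) f = f"
  using ac_raw(5) by simp
lemma id_r: "f \<in> hom C A B \<Longrightarrow> cp C f (idm C A) = f"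
  using ac_raw(5) by simp
lemma zm_hom: "A \<in> ob C \<Longrightarrow> B \<in> ob C \<Longrightarrow> zm C A B \<in> hom C A B"
  by (rule ac_raw(6)[rule_format])
lemma ad_hom: "f \<in> hom C A B \<Longrightarrow> g \<in> hom C A B \<Longrightarrow> ad C f g \<in> hom C A B"
  by (rule ac_raw(7)[rule_format])
lemma ng_hom: "f \<in> hom C A B \<Longrightarrow> ng C f \<in> hom C A B"
  by (rule ac_raw(8)[rule_format])
lemma ad_assoc: "f \<in> hom C A B \<Longrightarrow> g \<in> hom C A B \<Longrightarrow> h \<in> hom C A B \<Longrightarrow>
        ad C (ad C f g) h = ad C f (ad C g h)"
  by (rule ac_raw(9)[rule_format])
lemma ad_comm: "f \<in> hom C A B \<Longrightarrow> g \<in> hom C A B \<Longrightarrow> ad C f g = ad C g f"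
  by (rule ac_raw(10)[rule_format])
lemma ad_zr: "f \<in> hom C A B \<Longrightarrow> ad C f (zm C A B) = f"
  using ac_raw(11) by simp
lemma ad_ng: "f \<in> hom C A B \<Longrightarrow> ad C f (ng C f) = zm C A B"
  using ac_raw(11) by simp
lemma cp_ad_r: "f \<in> hom C A B \<Longrightarrow> f' \<in> hom C A B \<Longrightarrow> g \<in> hom C B D \<Longrightarrow>
        cp C g (ad C f f') = ad C (cp C g f) (cp C g f')"
  by (rule ac_raw(12)[rule_format])
lemma cp_ad_l: "f \<in> hom C A B \<Longrightarrow> g \<in> hom C B D \<Longrightarrow> g' \<in> hom C B D \<Longrightarrow>
        cp C (ad C g g') f = ad C (cp C g f) (cp C g' f)"
  by (rule ac_raw(13)[rule_format])
lemma bp_facts: "A \<in> ob C \<Longrightarrow> B \<in> ob C \<Longrightarrow> bp C A B \<in> ob C \<and>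
        in1 C A B \<in> hom C A (bp C A B) \<and> in2 C A B \<in> hom C B (bp C A B) \<and>
        pr1 C A B \<in> hom C (bp C A B) A \<and> pr2 C A B \<in> hom C (bp C A B) B \<and>
        cp C (pr1 C A B) (in1 C A B) = idm C A \<and> cp C (pr2 C A B) (in2 C A B) = idm C B \<and>
        cp C (pr1 C A B) (in2 C A B) = zm C B A \<and> cp C (pr2 C A B) (in1 C A B) = zm C A B"
  using ac_raw(14) by simp

lemma ad_zl: assumes "f \<in> hom C A B" shows "ad C (zm C A B) f = f"
proof -
  have z: "zm C A B \<in> hom C A B" using assms by (intro zm_hom ob_dm ob_cd)
  show ?thesis using ad_comm[OF z assms] ad_zr[OF assms] by simp
qed

lemma idem_zero: assumes "y \<in> hom C A B" "ad C y y = y" shows "y = zm C A B"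
proof -
  have n: "ng C y \<in> hom C A B" using assms(1) by (rule ng_hom)
  have "ad C (ad C y y) (ng C y) = zm C A B" using assms ad_ng by simp
  moreover have "ad C (ad C y y) (ng C y) = y"
    using ad_assoc[OF assms(1) assms(1) n] ad_ng[OF assms(1)] ad_zr[OF assms(1)] by simp
  ultimately show ?thesis by simp
qed

lemma ng_unique: assumes a: "a \<in> hom C A B" and b: "b \<in> hom C A B" and e: "ad C a b = zm C A B"
  shows "b = ng C a"
proof -
  have n: "ng C a \<in> hom C A B" using a by (rule ng_hom)
  have "b = ad C b (ad C a (ng C a))" using ad_ng[OF a] ad_zr[OF b] by simp
  also have "\<dots> = ad C (ad C b a) (ng C a)" using ad_assoc[OF b a n] by simp
  also have "\<dots> = ad C (ad C a b) (ng C a)" using ad_comm[OF a b] by simp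
  also have "\<dots> = ng C a" using e ad_zl[OF n] by simp
  finally show ?thesis .
qed

lemma cp_zm_l: assumes f: "f \<in> hom C A B" and D: "D \<in> ob C" shows "cp C (zm C B D) f = zm C A D"
proof -
  have z: "zm C B D \<in> hom C B D" using zm_hom[OF ob_cd[OF f] D] .
  have y: "cp C (zm C B D) f \<in> hom C A D" using f z by (rule cp_hom)
  have "cp C (zm C B D) f = cp C (ad C (zm C B D) (zm C B D)) f" using ad_zr[OF z] by simp
  also have "\<dots> = ad C (cp C (zm C B D) f) (cp C (zm C B D) f)" using cp_ad_l[OF f z z] .
  finally show ?thesis using idem_zero[OF y] by simp
qed

lemma cp_zm_r: assumes g: "g \<in> hom C B D" and A: "A \<in> ob C" shows "cp C g (zm C A B) = zm C A D"
proof -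
  have z: "zm C A B \<in> hom C A B" using zm_hom[OF A ob_dm[OF g]] .
  have y: "cp C g (zm C A B) \<in> hom C A D" using z g by (rule cp_hom)
  have "cp C g (zm C A B) = cp C g (ad C (zm C A B) (zm C A B))" using ad_zr[OF z] by simp
  also have "\<dots> = ad C (cp C g (zm C A B)) (cp C g (zm C A B))" using cp_ad_r[OF z z g] .
  finally show ?thesis using idem_zero[OF y] by simp
qed

lemma ng_zm: assumes "A \<in> ob C" "B \<in> ob C" shows "ng C (zm C A B) = zm C A B"
proof -
  have z: "zm C A B \<in> hom C A B" using assms by (rule zm_hom)
  show ?thesis using ng_unique[OF z z ad_zr[OF z]] by simp
qed

lemma cp_ng_l: assumes f: "f \<in> hom C A B" and g: "g \<in> hom C B D"
  shows "cp C (ng C g) f = ng C (cp C g f)"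
proof (rule ng_unique)
  have n: "ng C g \<in> hom C B D" using g by (rule ng_hom)
  show "cp C g f \<in> hom C A D" using f g by (rule cp_hom)
  show "cp C (ng C g) f \<in> hom C A D" using f n by (rule cp_hom)
  have "ad C (cp C g f) (cp C (ng C g) f) = cp C (ad C g (ng C g)) f" using cp_ad_l[OF f g n] by simp
  also have "\<dots> = zm C A D" using ad_ng[OF g] cp_zm_l[OF f ob_cd[OF g]] by simp
  finally show "ad C (cp C g f) (cp C (ng C g) f) = zm C A D" .
qed

lemma cp_ng_r: assumes f: "f \<in> hom C A B" and g: "g \<in> hom C B D"
  shows "cp C g (ng C f) = ng C (cp C g f)"
proof (rule ng_unique)
  have n: "ng C f \<in> hom C A B" using f by (rule ng_hom)
  show "cp C g f \<in> hom C A D" using f g by (rule cp_hom)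
  show "cp C g (ng C f) \<in> hom C A D" using n g by (rule cp_hom)
  have "ad C (cp C g f) (cp C g (ng C f)) = cp C g (ad C f (ng C f))" using cp_ad_r[OF f n g] by simp
  also have "\<dots> = zm C A D" using ad_ng[OF f] cp_zm_r[OF g ob_dm[OF f]] by simp
  finally show "ad C (cp C g f) (cp C g (ng C f)) = zm C A D" .
qed

lemma ng_ad: assumes f: "f \<in> hom C A B" and g: "g \<in> hom C A B"
  shows "ng C (ad C f g) = ad C (ng C f) (ng C g)"
proof (rule ng_unique[symmetric])
  have nf: "ng C f \<in> hom C A B" using f by (rule ng_hom)
  have ng: "ng C g \<in> hom C A B" using g by (rule ng_hom)
  show "ad C f g \<in> hom C A B" using f g by (rule ad_hom)
  show "ad C (ng C f) (ng C g) \<in> hom C A B" using nf ng by (rule ad_hom)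
  have "ad C (ad C f g) (ad C (ng C f) (ng C g)) = ad C f (ad C g (ad C (ng C f) (ng C g)))"
    using ad_assoc[OF f g ad_hom[OF nf ng]] .
  also have "ad C g (ad C (ng C f) (ng C g)) = ad C (ng C f) (ad C g (ng C g))"
    using ad_assoc[OF g nf ng] ad_assoc[OF nf g ng] ad_comm[OF g nf] by simp
  also have "\<dots> = ng C f" using ad_ng[OF g] ad_zr[OF nf] by simp
  also have "ad C f (ng C f) = zm C A B" using ad_ng[OF f] .
  finally show "ad C (ad C f g) (ad C (ng C f) (ng C g)) = zm C A B" .
qed
end

context fixes C :: "('o,'m,'e,'z) exang_data_scheme" assumes be: "biadditive_E C"
begin
lemma be_raw:
 "(\<forall>d\<in>ext C. edm C d \<in> ob C \<and> ecd C d \<in> ob C)"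
 "(\<forall>X A d. d \<in> Ext C X A \<longrightarrow> eng C d \<in> Ext C X A)"
 "(\<forall>X A d d' d''. d \<in> Ext C X A \<longrightarrow> d' \<in> Ext C X A \<longrightarrow> d'' \<in> Ext C X A \<longrightarrow>
        ead C (ead C d d') d'' = ead C d (ead C d' d''))"
 "(\<forall>X A d. d \<in> Ext C X A \<longrightarrow> ead C d (ezr C X A) = d \<and> ead C d (eng C d) = ezr C X A)"
 "(\<forall>X A A' a d. a \<in> hom C A A' \<longrightarrow> d \<in> Ext C X A \<longrightarrow> psh C a d \<in> Ext C X A')"
 "(\<forall>X X' A c d. c \<in> hom C X' X \<longrightarrow> d \<in> Ext C X A \<longrightarrow> pll C c d \<in> Ext C X' A)"
 "(\<forall>X A d. d \<in> Ext C X A \<longrightarrow> psh C (idm C A) d = d \<and> pll C (idm C X) d = d)"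
 "(\<forall>X A A' a a' d. a \<in> hom C A A' \<longrightarrow> a' \<in> hom C A A' \<longrightarrow> d \<in> Ext C X A \<longrightarrow>
        psh C (ad C a a') d = ead C (psh C a d) (psh C a' d))"
 "(\<forall>X X' A c c' d. c \<in> hom C X' X \<longrightarrow> c' \<in> hom C X' X \<longrightarrow> d \<in> Ext C X A \<longrightarrow>
        pll C (ad C c c') d = ead C (pll C c d) (pll C c' d))"
  by (insert be[unfolded biadditive_E_def], (elim conjE, assumption)+)

lemma psh_Ext: "a \<in> hom C A A' \<Longrightarrow> d \<in> Ext C X A \<Longrightarrow> psh C a d \<in> Ext C X A'"
  by (rule be_raw(5)[rule_format])
lemma pll_Ext: "c \<in> hom C X' X \<Longrightarrow> d \<in> Ext C X A \<Longrightarrow> pll C c d \<in> Ext C X' A"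
  by (rule be_raw(6)[rule_format])
lemma pll_id: "d \<in> Ext C X A \<Longrightarrow> pll C (idm C X) d = d"
  using be_raw(7) by simp

lemma e_idem_zero: assumes y: "y \<in> Ext C X A" and e: "ead C y y = y" shows "y = ezr C X A"
proof -
  have n: "eng C y \<in> Ext C X A" using y be_raw(2) by simp
  have "ead C (ead C y y) (eng C y) = ezr C X A" using e y be_raw(4) by simp
  moreover have "ead C (ead C y y) (eng C y) = y"
    using be_raw(3)[rule_format, OF y y n] be_raw(4) y by simp
  ultimately show ?thesis by simp
qed
end

lemma psh_zm: assumes ac: "additive_cat C" and be: "biadditive_E C"
  and d: "d \<in> Ext C X A" and A: "A \<in> ob C" and A': "A' \<in> ob C"
  shows "psh C (zm C A A') d = ezr C X A'"
proof -
  have z: "zm C A A' \<in> hom C A A'" using zm_hom[OF ac A A'] .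
  have y: "psh C (zm C A A') d \<in> Ext C X A'" using psh_Ext[OF be z d] .
  have "psh C (zm C A A') d = psh C (ad C (zm C A A') (zm C A A')) d" using ad_zr[OF ac z] by simp
  also have "\<dots> = ead C (psh C (zm C A A') d) (psh C (zm C A A') d)"
    using be_raw(8)[OF be, rule_format, OF z z d] .
  finally show ?thesis using e_idem_zero[OF be y] by simp
qed

lemma pll_zm: assumes ac: "additive_cat C" and be: "biadditive_E C"
  and d: "d \<in> Ext C X A" and X: "X \<in> ob C" and X': "X' \<in> ob C"
  shows "pll C (zm C X' X) d = ezr C X' A"
proof -
  have z: "zm C X' X \<in> hom C X' X" using zm_hom[OF ac X' X] .
  have y: "pll C (zm C X' X) d \<in> Ext C X' A" using pll_Ext[OF be z d] .
  have "pll C (zm C X' X) d = pll C (ad C (zm C X' X) (zm C X' X)) d" using ad_zr[OF ac z] by simp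
  also have "\<dots> = ead C (pll C (zm C X' X) d) (pll C (zm C X' X) d)"
    using be_raw(9)[OF be, rule_format, OF z z d] .
  finally show ?thesis using e_idem_zero[OF be y] by simp
qed


lemma cplx: assumes "is_complex n C X d"
  shows "\<And>i. i \<le> Suc n \<Longrightarrow> X i \<in> ob C" "\<And>i. i \<le> n \<Longrightarrow> d i \<in> hom C (X i) (X (Suc i))"
  using assms unfolding is_complex_def by auto

lemma cmorphD: assumes "cmorph n C X d Y e f"
  shows "\<And>i. i \<le> Suc n \<Longrightarrow> f i \<in> hom C (X i) (Y i)"
    "\<And>i. i \<le> n \<Longrightarrow> cp C (f (Suc i)) (d i) = cp C (e i) (f i)"
  using assms unfolding cmorph_def by auto

context fixes n and C :: "('o,'m,'e,'z) exang_data_scheme" assumes nex: "n_exangulated n C"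
begin
lemma n1: "1 \<le> n" using nex unfolding n_exangulated_def by simp
lemma ac: "additive_cat C" using nex unfolding n_exangulated_def by simp
lemma be: "biadditive_E C" using nex unfolding n_exangulated_def by simp
lemma re: "realization n C" using nex unfolding n_exangulated_def by simp

lemma ea2: "(\<forall>rho c D A Cc X d Y e. rho \<in> Ext C D A \<longrightarrow> c \<in> hom C Cc D \<longrightarrow>
        rl C (pll C c rho) X d \<longrightarrow> rl C rho Y e \<longrightarrow>
        (\<exists>f. cmorph n C X d Y e f \<and> f 0 = idm C A \<and> f (Suc n) = c \<and>
             rl C (psh C (d 0) rho) (cone_obj n C X Y) (cone_d n C X d Y e f)))"
  by (insert nex[unfolded n_exangulated_def], (elim conjE, assumption))

lemma re_raw:
  "(\<forall>del X d. rl C del X d \<longrightarrow> del \<in> ext C \<and> is_complex n C X d \<and>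
        X 0 = ecd C del \<and> X (Suc n) = edm C del)"
  "(\<forall>del \<in> ext C. \<exists>X d. rl C del X d)"
  "(\<forall>del del' a c X d Y e. rl C del X d \<longrightarrow> rl C del' Y e \<longrightarrow>
        a \<in> hom C (ecd C del) (ecd C del') \<longrightarrow> c \<in> hom C (edm C del) (edm C del') \<longrightarrow>
        psh C a del = pll C c del' \<longrightarrow>
        (\<exists>f. cmorph n C X d Y e f \<and> f 0 = a \<and> f (Suc n) = c))"
  by (insert re[unfolded realization_def], (elim conjE, assumption)+)

lemma rlD: assumes "rl C del X d"
  shows "del \<in> Ext C (X (Suc n)) (X 0)" "is_complex n C X d"
  using re_raw(1) assms unfolding Ext_def by auto

lemma bwd:
  assumes sB: "S_obj n C B b del'" and mor: "S_mor n C A a del B b del' phi"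
    and ret: "retraction C (copair C (phi (Suc n)) (b n))"
  shows "S_R2_epi n C A a del B b del' phi"
  unfolding S_R2_epi_def
proof (intro allI impI)
  fix Z z del'' g g'
  assume sZ: "S_obj n C Z z del''" and mg: "S_mor n C B b del' Z z del'' g"
    and mg': "S_mor n C B b del' Z z del'' g'"
    and eq: "R2_equiv n C A Z z (ccomp C g phi) (ccomp C g' phi)"
  have ac: "additive_cat C" by (rule ac)
  have cB: "is_complex n C B b" using sB rlD unfolding S_obj_def by blast
  have cZ: "is_complex n C Z z" using sZ rlD unfolding S_obj_def by blast
  have cp: "cmorph n C A a B b phi" using mor unfolding S_mor_def by blast
  have cg: "cmorph n C B b Z z g" using mg unfolding S_mor_def by blast
  have cg': "cmorph n C B b Z z g'" using mg' unfolding S_mor_def by blast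
  define c where "c = phi (Suc n)"
  define bn where "bn = b n"
  define zn where "zn = z n"
  have cH: "c \<in> hom C (A (Suc n)) (B (Suc n))" using cmorphD(1)[OF cp, of "Suc n"] c_def by simp
  have bH: "bn \<in> hom C (B n) (B (Suc n))" using cplx(2)[OF cB, of n] bn_def by simp
  have zH: "zn \<in> hom C (Z n) (Z (Suc n))" using cplx(2)[OF cZ, of n] zn_def by simp
  have gH: "g (Suc n) \<in> hom C (B (Suc n)) (Z (Suc n))" using cmorphD(1)[OF cg, of "Suc n"] by simp
  have gH': "g' (Suc n) \<in> hom C (B (Suc n)) (Z (Suc n))" using cmorphD(1)[OF cg', of "Suc n"] by simp
  have gnH: "g n \<in> hom C (B n) (Z n)" using cmorphD(1)[OF cg, of n] by simp
  have gnH': "g' n \<in> hom C (B n) (Z n)" using cmorphD(1)[OF cg', of n] by simp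
  have gc: "cp C (g (Suc n)) bn = cp C zn (g n)" using cmorphD(2)[OF cg, of n] bn_def zn_def by simp
  have gc': "cp C (g' (Suc n)) bn = cp C zn (g' n)" using cmorphD(2)[OF cg', of n] bn_def zn_def by simp
  obtain h where hH: "h \<in> hom C (A (Suc n)) (Z n)"
    and hE: "ad C (cp C (g (Suc n)) c) (ng C (cp C (g' (Suc n)) c)) = cp C zn h"
    using eq unfolding R2_equiv_def ccomp_def c_def zn_def by blast
  have Ao: "A (Suc n) \<in> ob C" using ob_dm[OF ac cH] .
  have Bo: "B n \<in> ob C" using ob_dm[OF ac bH] .
  define P where "P = bp C (A (Suc n)) (B n)"
  define p1 where "p1 = pr1 C (A (Suc n)) (B n)"
  define p2 where "p2 = pr2 C (A (Suc n)) (B n)"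
  have p1H: "p1 \<in> hom C P (A (Suc n))" using bp_facts[OF ac Ao Bo] p1_def P_def by simp
  have p2H: "p2 \<in> hom C P (B n)" using bp_facts[OF ac Ao Bo] p2_def P_def by simp
  have r: "copair C (phi (Suc n)) (b n) = ad C (cp C c p1) (cp C bn p2)"
    unfolding copair_def c_def[symmetric] bn_def[symmetric] p1_def p2_def
    using homD[OF cH] homD[OF bH] by simp
  have c1H: "cp C c p1 \<in> hom C P (B (Suc n))" using cp_hom[OF ac p1H cH] .
  have c2H: "cp C bn p2 \<in> hom C P (B (Suc n))" using cp_hom[OF ac p2H bH] .
  have rH: "ad C (cp C c p1) (cp C bn p2) \<in> hom C P (B (Suc n))" using ad_hom[OF ac c1H c2H] .
  obtain s where sH: "s \<in> hom C (B (Suc n)) P"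
    and sE: "cp C (ad C (cp C c p1) (cp C bn p2)) s = idm C (B (Suc n))"
    using ret unfolding retraction_def r using homD[OF rH] by auto
  define Dl where "Dl = ad C (g (Suc n)) (ng C (g' (Suc n)))"
  define En where "En = ad C (g n) (ng C (g' n))"
  have ngH': "ng C (g' (Suc n)) \<in> hom C (B (Suc n)) (Z (Suc n))" using ng_hom[OF ac gH'] .
  have DH: "Dl \<in> hom C (B (Suc n)) (Z (Suc n))" unfolding Dl_def using ad_hom[OF ac gH ngH'] .
  have ngnH': "ng C (g' n) \<in> hom C (B n) (Z n)" using ng_hom[OF ac gnH'] .
  have EH: "En \<in> hom C (B n) (Z n)" unfolding En_def using ad_hom[OF ac gnH ngnH'] .
  have hp1: "cp C h p1 \<in> hom C P (Z n)" using cp_hom[OF ac p1H hH] .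
  have Ep2: "cp C En p2 \<in> hom C P (Z n)" using cp_hom[OF ac p2H EH] .
  have q: "ad C (cp C h p1) (cp C En p2) \<in> hom C P (Z n)" using ad_hom[OF ac hp1 Ep2] .
  have Dc: "cp C Dl c = cp C zn h"
    unfolding Dl_def using cp_ad_l[OF ac cH gH ngH'] cp_ng_l[OF ac cH gH'] hE by simp
  have Db: "cp C Dl bn = cp C zn En"
  proof -
    have "cp C Dl bn = ad C (cp C (g (Suc n)) bn) (ng C (cp C (g' (Suc n)) bn))"
      unfolding Dl_def using cp_ad_l[OF ac bH gH ngH'] cp_ng_l[OF ac bH gH'] by simp
    also have "\<dots> = ad C (cp C zn (g n)) (cp C zn (ng C (g' n)))"
      using gc gc' cp_ng_r[OF ac gnH' zH] by simp
    also have "\<dots> = cp C zn En" unfolding En_def using cp_ad_r[OF ac gnH ngnH' zH] by simp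
    finally show ?thesis .
  qed
  have Dr: "cp C Dl (ad C (cp C c p1) (cp C bn p2)) = cp C zn (ad C (cp C h p1) (cp C En p2))"
  proof -
    have "cp C Dl (ad C (cp C c p1) (cp C bn p2)) = ad C (cp C Dl (cp C c p1)) (cp C Dl (cp C bn p2))"
      using cp_ad_r[OF ac c1H c2H DH] .
    also have "\<dots> = ad C (cp C (cp C Dl c) p1) (cp C (cp C Dl bn) p2)"
      using cp_assoc[OF ac p1H cH DH] cp_assoc[OF ac p2H bH DH] by simp
    also have "\<dots> = ad C (cp C (cp C zn h) p1) (cp C (cp C zn En) p2)" using Dc Db by simp
    also have "\<dots> = ad C (cp C zn (cp C h p1)) (cp C zn (cp C En p2))"
      using cp_assoc[OF ac p1H hH zH] cp_assoc[OF ac p2H EH zH] by simp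
    also have "\<dots> = cp C zn (ad C (cp C h p1) (cp C En p2))" using cp_ad_r[OF ac hp1 Ep2 zH] by simp
    finally show ?thesis .
  qed
  have "Dl = cp C Dl (idm C (B (Suc n)))" using id_r[OF ac DH] by simp
  also have "\<dots> = cp C (cp C Dl (ad C (cp C c p1) (cp C bn p2))) s"
    using sE cp_assoc[OF ac sH rH DH] by simp
  also have "\<dots> = cp C zn (cp C (ad C (cp C h p1) (cp C En p2)) s)"
    using Dr cp_assoc[OF ac sH q zH] by simp
  finally have fin: "Dl = cp C zn (cp C (ad C (cp C h p1) (cp C En p2)) s)" .
  have wH: "cp C (ad C (cp C h p1) (cp C En p2)) s \<in> hom C (B (Suc n)) (Z n)" using cp_hom[OF ac sH q] .
  show "R2_equiv n C B Z z g g'"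
    unfolding R2_equiv_def using fin wH unfolding Dl_def zn_def by blast
qed

lemma fwd:
  assumes sB: "S_obj n C B b del'" and mor: "S_mor n C A a del B b del' phi"
    and epi: "S_R2_epi n C A a del B b del' phi"
  shows "retraction C (copair C (phi (Suc n)) (b n))"
proof -
  have ac: "additive_cat C" by (rule ac)
  have be: "biadditive_E C" by (rule be)
  have n1: "1 \<le> n" by (rule n1)
  have rB: "rl C del' B b" using sB unfolding S_obj_def .
  have dE: "del' \<in> Ext C (B (Suc n)) (B 0)" using rlD(1)[OF rB] .
  have cB: "is_complex n C B b" using rlD(2)[OF rB] .
  have cp: "cmorph n C A a B b phi" using mor unfolding S_mor_def by blast
  define c where "c = phi (Suc n)"
  have cH: "c \<in> hom C (A (Suc n)) (B (Suc n))" using cmorphD(1)[OF cp, of "Suc n"] c_def by simp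
  have bH: "b n \<in> hom C (B n) (B (Suc n))" using cplx(2)[OF cB, of n] by simp
  have Ao: "A (Suc n) \<in> ob C" using ob_dm[OF ac cH] .
  have Bo: "B n \<in> ob C" using ob_dm[OF ac bH] .
  have BSo: "B (Suc n) \<in> ob C" using ob_cd[OF ac cH] .
  have pE: "pll C c del' \<in> Ext C (A (Suc n)) (B 0)" using pll_Ext[OF be cH dE] .
  then obtain X d where rX: "rl C (pll C c del') X d" using re_raw(2) unfolding Ext_def by blast
  obtain f where fm: "cmorph n C X d B b f" and f0: "f 0 = idm C (B 0)" and fS: "f (Suc n) = c"
    and rZ: "rl C (psh C (d 0) del') (cone_obj n C X B) (cone_d n C X d B b f)"
    using ea2[rule_format, OF dE cH rX rB] by blast
  define Z where "Z = cone_obj n C X B"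
  define z where "z = cone_d n C X d B b f"
  define th where "th = psh C (d 0) del'"
  have rZ': "rl C th Z z" using rZ Z_def z_def th_def by simp
  have XE: "pll C c del' \<in> Ext C (X (Suc n)) (X 0)" using rlD(1)[OF rX] .
  have X0: "X 0 = B 0" and XS: "X (Suc n) = A (Suc n)" using XE pE unfolding Ext_def by auto
  have cX: "is_complex n C X d" using rlD(2)[OF rX] .
  have d0H: "d 0 \<in> hom C (B 0) (X 1)" using cplx(2)[OF cX, of 0] X0 by simp
  have thE: "th \<in> Ext C (B (Suc n)) (X 1)" unfolding th_def using psh_Ext[OF be d0H dE] .
  have thE': "th \<in> Ext C (Z (Suc n)) (Z 0)" using rlD(1)[OF rZ'] .
  have cZ: "is_complex n C Z z" using rlD(2)[OF rZ'] .
  have ZS: "Z (Suc n) = B (Suc n)" unfolding Z_def cone_obj_def by simp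
  have Zn: "Z n = bp C (A (Suc n)) (B n)" unfolding Z_def cone_obj_def using n1 XS by simp
  have zn: "z n = copair C c (b n)"
    unfolding z_def cone_d_def copair_def using n1 XS fS homD[OF cH] homD[OF bH] by simp
  have znH: "z n \<in> hom C (Z n) (Z (Suc n))" using cplx(2)[OF cZ, of n] by simp
  have idH: "idm C (B (Suc n)) \<in> hom C (edm C del') (edm C th)"
    using id_hom[OF ac BSo] dE thE unfolding Ext_def by simp
  have d0H': "d 0 \<in> hom C (ecd C del') (ecd C th)" using d0H dE thE unfolding Ext_def by simp
  have pe: "psh C (d 0) del' = pll C (idm C (B (Suc n))) th"
    using pll_id[OF be thE] th_def by simp
  obtain k where km: "cmorph n C B b Z z k" and k0: "k 0 = d 0" and kS: "k (Suc n) = idm C (B (Suc n))"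
    using re_raw(3)[rule_format, OF rB rZ' d0H' idH pe] by blast
  have mk: "S_mor n C B b del' Z z th k"
    unfolding S_mor_def using km k0 kS pe th_def by simp
  define g0 where "g0 = (\<lambda>i. zm C (B i) (Z i))"
  have Zo: "\<And>i. i \<le> Suc n \<Longrightarrow> Z i \<in> ob C" using cplx(1)[OF cZ] .
  have Bo': "\<And>i. i \<le> Suc n \<Longrightarrow> B i \<in> ob C" using cplx(1)[OF cB] .
  have g0m: "cmorph n C B b Z z g0"
    unfolding cmorph_def
  proof (intro conjI allI impI)
    fix i assume "i \<le> Suc n"
    then show "g0 i \<in> hom C (B i) (Z i)" unfolding g0_def using zm_hom[OF ac] Zo Bo' by simp
  next
    fix i assume i: "i \<le> n"
    have bi: "b i \<in> hom C (B i) (B (Suc i))" using cplx(2)[OF cB i] .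
    have zi: "z i \<in> hom C (Z i) (Z (Suc i))" using cplx(2)[OF cZ i] .
    show "cp C (g0 (Suc i)) (b i) = cp C (z i) (g0 i)"
      unfolding g0_def using cp_zm_l[OF ac bi Zo[of "Suc i"]] cp_zm_r[OF ac zi Bo'[of i]] i by simp
  qed
  have Z0o: "Z 0 \<in> ob C" using Zo by simp
  have B0o: "B 0 \<in> ob C" using Bo' by simp
  have mg0: "S_mor n C B b del' Z z th g0"
    unfolding S_mor_def using g0m psh_zm[OF ac be dE B0o Z0o] pll_zm[OF ac be thE' Zo[of "Suc n"] Bo'[of "Suc n"]] ZS
    unfolding g0_def by simp
  have sZ: "S_obj n C Z z th" unfolding S_obj_def using rZ' .
  have in1H: "in1 C (A (Suc n)) (B n) \<in> hom C (A (Suc n)) (Z n)" using bp_facts[OF ac Ao Bo] Zn by simp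
  have p1H: "pr1 C (A (Suc n)) (B n) \<in> hom C (Z n) (A (Suc n))" using bp_facts[OF ac Ao Bo] Zn by simp
  have p2H: "pr2 C (A (Suc n)) (B n) \<in> hom C (Z n) (B n)" using bp_facts[OF ac Ao Bo] Zn by simp
  have c1H: "cp C c (pr1 C (A (Suc n)) (B n)) \<in> hom C (Z n) (B (Suc n))" using cp_hom[OF ac p1H cH] .
  have c2H: "cp C (b n) (pr2 C (A (Suc n)) (B n)) \<in> hom C (Z n) (B (Suc n))" using cp_hom[OF ac p2H bH] .
  have zin: "cp C (z n) (in1 C (A (Suc n)) (B n)) = c"
  proof -
    have "cp C (z n) (in1 C (A (Suc n)) (B n)) =
       ad C (cp C (cp C c (pr1 C (A (Suc n)) (B n))) (in1 C (A (Suc n)) (B n)))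
            (cp C (cp C (b n) (pr2 C (A (Suc n)) (B n))) (in1 C (A (Suc n)) (B n)))"
      unfolding zn copair_def using homD[OF cH] homD[OF bH] cp_ad_l[OF ac in1H c1H c2H] by simp
    also have "\<dots> = ad C (cp C c (cp C (pr1 C (A (Suc n)) (B n)) (in1 C (A (Suc n)) (B n))))
            (cp C (b n) (cp C (pr2 C (A (Suc n)) (B n)) (in1 C (A (Suc n)) (B n))))"
      using cp_assoc[OF ac in1H p1H cH] cp_assoc[OF ac in1H p2H bH] by simp
    also have "\<dots> = ad C c (cp C (b n) (zm C (A (Suc n)) (B n)))"
      using bp_facts[OF ac Ao Bo] id_r[OF ac cH] by simp
    also have "\<dots> = c" using cp_zm_r[OF ac bH Ao] ad_zr[OF ac cH] by simp
    finally show ?thesis .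
  qed
  have hyp: "R2_equiv n C A Z z (ccomp C k phi) (ccomp C g0 phi)"
    unfolding R2_equiv_def ccomp_def
  proof (rule bexI[of _ "in1 C (A (Suc n)) (B n)"])
    show "in1 C (A (Suc n)) (B n) \<in> hom C (A (Suc n)) (Z n)" using in1H .
    have "cp C (g0 (Suc n)) c = zm C (A (Suc n)) (B (Suc n))"
      unfolding g0_def ZS using cp_zm_l[OF ac cH BSo] .
    then show "ad C (cp C (k (Suc n)) (phi (Suc n))) (ng C (cp C (g0 (Suc n)) (phi (Suc n)))) =
      cp C (z n) (in1 C (A (Suc n)) (B n))"
      unfolding c_def[symmetric] zin kS using id_l[OF ac cH] ng_zm[OF ac Ao BSo] ad_zr[OF ac cH] by simp
  qed
  have "R2_equiv n C B Z z k g0"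
    using epi sZ mk mg0 hyp unfolding S_R2_epi_def by blast
  then obtain h where hH: "h \<in> hom C (B (Suc n)) (Z n)"
    and hE: "ad C (k (Suc n)) (ng C (g0 (Suc n))) = cp C (z n) h"
    unfolding R2_equiv_def by blast
  have idE: "idm C (B (Suc n)) = cp C (z n) h"
    using hE kS unfolding g0_def ZS using ng_zm[OF ac BSo BSo] ad_zr[OF ac id_hom[OF ac BSo]] by simp
  have rH: "copair C c (b n) \<in> hom C (Z n) (B (Suc n))" using znH zn ZS by simp
  show ?thesis
    unfolding retraction_def c_def[symmetric] using homD[OF rH] hH idE zn by auto
qed
end

theorem lemma4p2:
  fixes C :: "('o, 'm, 'e) exang_data"
  assumes "n_exangulated n C"
    and "S_obj n C A a del"
    and "S_obj n C B b del'"
    and "S_mor n C A a del B b del' phi"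
  shows "S_R2_epi n C A a del B b del' phi \<longleftrightarrow> retraction C (copair C (phi (Suc n)) (b n))"
  using fwd[OF assms(1,3,4)] bwd[OF assms(1,3,4)] by blast

end
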